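(* Let $X$ be a Tychonoff space. The following are equivalent: (1) $X$ is finite; (2) $T''(X)$ is Noetherian; (3) $T''(X)$ is Artinian.
   Context: $C(X)$ is the ring of real-valued continuous functions on $X$; a cozero set is a set $\{x: h(x)\neq 0\}$ with $h\in C(X)$. $T''(X)$ is the ring (under pointwise operations) of all functions $f\colon X\to\mathbb{R}$ for which there is a dense cozero set $U$ of $X$ with $f|_U$ continuous. *)

theory Defs
  imports "HOL-Analysis.Analysis" "HOL-Algebra.Ring_Divisibility"
begin

definition tychonoff_space :: "'a topology \<Rightarrow> bool" where
  "tychonoff_space X \<longleftrightarrow> completely_regular_space X \<and> t1_space X"

definition cozero_set :: "'a topology \<Rightarrow> ('a \<Rightarrow> real) \<Rightarrow> 'a set" where
  "cozero_set X h = {x \<in> topspace X. h x \<noteq> 0}"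

definition is_cozero :: "'a topology \<Rightarrow> 'a set \<Rightarrow> bool" where
  "is_cozero X U \<longleftrightarrow> (\<exists>h. continuous_map X euclideanreal h \<and> U = cozero_set X h)"

text \<open>Functions X -> R are represented as extensional functions on topspace X.\<close>
definition Tpp_carrier :: "'a topology \<Rightarrow> ('a \<Rightarrow> real) set" where
  "Tpp_carrier X = {f. f \<in> extensional (topspace X) \<and>
     (\<exists>U. is_cozero X U \<and> X closure_of U = topspace X \<and>
          continuous_map (subtopology X U) euclideanreal f)}"

definition Tpp :: "'a topology \<Rightarrow> ('a \<Rightarrow> real) ring" where
  "Tpp X = \<lparr> carrier = Tpp_carrier X,
             mult = (\<lambda>f g. \<lambda>x\<in>topspace X. f x * g x),
             one = (\<lambda>x\<in>topspace X. 1),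
             zero = (\<lambda>x\<in>topspace X. 0),
             add = (\<lambda>f g. \<lambda>x\<in>topspace X. f x + g x) \<rparr>"

definition artinian_ring :: "('b, 'c) ring_scheme \<Rightarrow> bool" where
  "artinian_ring R \<longleftrightarrow> ring R \<and>
     (\<forall>I :: nat \<Rightarrow> 'b set. (\<forall>n. ideal (I n) R) \<and> (\<forall>n. I (Suc n) \<subseteq> I n)
        \<longrightarrow> (\<exists>m. \<forall>n\<ge>m. I n = I m))"

end

theory Submission
  imports Defs
begin

lemma Tpp_simps:
  "carrier (Tpp X) = Tpp_carrier X"
  "mult (Tpp X) = (\<lambda>f g. \<lambda>x\<in>topspace X. f x * g x)"
  "one (Tpp X) = (\<lambda>x\<in>topspace X. 1)"
  "zero (Tpp X) = (\<lambda>x\<in>topspace X. 0)"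
  "add (Tpp X) = (\<lambda>f g. \<lambda>x\<in>topspace X. f x + g x)"
  by (simp_all add: Tpp_def)

lemma cont_in_carrier:
  assumes "continuous_map X euclideanreal h"
  shows "restrict h (topspace X) \<in> carrier (Tpp X)"
proof -
  have "is_cozero X (topspace X)"
    unfolding is_cozero_def cozero_set_def
    by (rule exI[of _ "\<lambda>_. 1"]) auto
  moreover have "continuous_map (subtopology X (topspace X)) euclideanreal (restrict h (topspace X))"
    using assms by (simp add: continuous_map_eq)
  ultimately show ?thesis
    unfolding Tpp_simps Tpp_carrier_def by (auto intro!: exI[of _ "topspace X"])
qed

lemma vanish_ideal:
  assumes R: "ring (Tpp X)" and P: "P \<subseteq> topspace X"
  shows "ideal {f \<in> carrier (Tpp X). \<forall>x\<in>P. f x = 0} (Tpp X)"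
proof -
  interpret ring "Tpp X" by (rule R)
  let ?I = "{f \<in> carrier (Tpp X). \<forall>x\<in>P. f x = 0}"
  have mul: "x \<otimes>\<^bsub>Tpp X\<^esub> a \<in> ?I" "a \<otimes>\<^bsub>Tpp X\<^esub> x \<in> ?I" if "a \<in> ?I" "x \<in> carrier (Tpp X)" for a x
    using that P m_closed[of x a] m_closed[of a x] by (auto simp: Tpp_simps(2) subset_iff)
  have neg: "\<ominus>\<^bsub>Tpp X\<^esub> a \<in> ?I" if a: "a \<in> ?I" for a
  proof -
    have "\<ominus>\<^bsub>Tpp X\<^esub> a = \<ominus>\<^bsub>Tpp X\<^esub> (\<one>\<^bsub>Tpp X\<^esub> \<otimes>\<^bsub>Tpp X\<^esub> a)"
      using a by simp
    also have "\<dots> = (\<ominus>\<^bsub>Tpp X\<^esub> \<one>\<^bsub>Tpp X\<^esub>) \<otimes>\<^bsub>Tpp X\<^esub> a"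
      using a by (simp add: l_minus)
    finally show ?thesis using mul(1)[OF a] by simp
  qed
  show ?thesis
  proof (rule idealI[OF R])
    show "subgroup ?I (add_monoid (Tpp X))"
    proof
      show "?I \<subseteq> carrier (add_monoid (Tpp X))" by auto
      show "x \<otimes>\<^bsub>add_monoid (Tpp X)\<^esub> y \<in> ?I" if "x \<in> ?I" "y \<in> ?I" for x y
        using that P a_closed[of x y] by (auto simp: Tpp_simps(5) subset_iff)
      show "\<one>\<^bsub>add_monoid (Tpp X)\<^esub> \<in> ?I"
        using P zero_closed by (auto simp: Tpp_simps(4) subset_iff)
      show "inv\<^bsub>add_monoid (Tpp X)\<^esub> x \<in> ?I" if "x \<in> ?I" for x
        using neg[OF that] by (simp add: a_inv_def)
    qed
  qed (use mul in auto)
qed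

lemma haus_split:
  assumes H: "Hausdorff_space X" and S: "infinite S" "S \<subseteq> topspace X"
  shows "\<exists>y V. y \<in> S \<and> openin X V \<and> y \<in> V \<and> infinite (S - V)"
proof -
  obtain a where a: "a \<in> S" using infinite_imp_nonempty[OF S(1)] by blast
  have "infinite (S - {a})" using S(1) by simp
  then obtain b where b0: "b \<in> S - {a}" using infinite_imp_nonempty by blast
  then have b: "b \<in> S" "b \<noteq> a" by auto
  have "a \<in> topspace X" "b \<in> topspace X" "a \<noteq> b" using a b S(2) by auto
  then have "\<exists>A B. openin X A \<and> openin X B \<and> a \<in> A \<and> b \<in> B \<and> disjnt A B"
    using H unfolding Hausdorff_space_def by metis
  then obtain A B where AB: "openin X A" "openin X B" "a \<in> A" "b \<in> B" "disjnt A B"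
    by blast
  show ?thesis
  proof (cases "infinite (S - A)")
    case True then show ?thesis using a AB by blast
  next
    case False
    have "S = (S - A) \<union> (S \<inter> A)" by blast
    then have "infinite (S \<inter> A)" using S(1) False by (metis finite_Un)
    moreover have "S \<inter> A \<subseteq> S - B" using AB(5) by (auto simp: disjnt_def)
    ultimately have "infinite (S - B)" using finite_subset by blast
    then show ?thesis using b AB by blast
  qed
qed

lemma haus_seq:
  assumes H: "Hausdorff_space X" and S: "infinite (topspace X)"
  shows "\<exists>(y::nat \<Rightarrow> 'a) V. (\<forall>n. y n \<in> topspace X \<and> openin X (V n) \<and> y n \<in> V n \<and>
             (\<forall>k>n. y k \<notin> V n))"
proof -
  define step where "step = (\<lambda>S. SOME p. fst p \<in> S \<and> openin X (snd p) \<and> fst p \<in> snd p \<and> infinite (S - snd p))"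
  have step: "fst (step S) \<in> S \<and> openin X (snd (step S)) \<and> fst (step S) \<in> snd (step S) \<and> infinite (S - snd (step S))"
    if inf: "infinite S" and sub: "S \<subseteq> topspace X" for S
  proof -
    obtain y V where "y \<in> S \<and> openin X V \<and> y \<in> V \<and> infinite (S - V)"
      using haus_split[OF H inf sub] by blast
    then have "\<exists>p. fst p \<in> S \<and> openin X (snd p) \<and> fst p \<in> snd p \<and> infinite (S - snd p)"
      by (intro exI[of _ "(y,V)"]) auto
    then show ?thesis unfolding step_def by (rule someI_ex)
  qed
  define T where "T = rec_nat (topspace X) (\<lambda>_ S. S - snd (step S))"
  have T0: "T 0 = topspace X" and TS: "T (Suc n) = T n - snd (step (T n))" for n
    by (simp_all add: T_def)
  have Tinf: "infinite (T n) \<and> T n \<subseteq> topspace X" for n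
  proof (induction n)
    case 0 then show ?case using S T0 by simp
  next
    case (Suc n) then show ?case using step[of "T n"] TS[of n] by auto
  qed
  have Tmono: "T k \<subseteq> T n" if "n \<le> k" for n k
    using lift_Suc_antimono_le[of T, OF _ that] TS by blast
  define y where "y n = fst (step (T n))" for n
  define V where "V n = snd (step (T n))" for n
  have "y n \<in> topspace X \<and> openin X (V n) \<and> y n \<in> V n \<and> (\<forall>k>n. y k \<notin> V n)" for n
  proof -
    have s: "fst (step (T n)) \<in> T n \<and> openin X (snd (step (T n))) \<and> fst (step (T n)) \<in> snd (step (T n))"
      using step[of "T n"] Tinf[of n] by blast
    have "y k \<notin> V n" if "k > n" for k
    proof -
      have "y k \<in> T k" using step[of "T k"] Tinf[of k] unfolding y_def by blast
      also have "T k \<subseteq> T (Suc n)" using Tmono that by simp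
      finally show ?thesis using TS V_def by auto
    qed
    then show ?thesis using s Tinf[of n] y_def V_def by auto
  qed
  then show ?thesis by blast
qed

lemma sep_fun:
  assumes CR: "completely_regular_space X" and C: "closedin X C" and x: "x \<in> topspace X" "x \<notin> C"
  shows "\<exists>g \<in> carrier (Tpp X). g x = 1 \<and> (\<forall>z\<in>C. g z = 0)"
proof -
  have "x \<in> topspace X - C" using x by blast
  then have "\<exists>f::'a\<Rightarrow>real. continuous_map X (top_of_set {0..1}) f \<and> f x = 0 \<and> f ` C \<subseteq> {1}"
    using CR C unfolding completely_regular_space_def by simp
  then obtain f :: "'a \<Rightarrow> real" where f: "continuous_map X (top_of_set {0..1}) f" "f x = 0" "f ` C \<subseteq> {1}"
    by blast
  have "continuous_map X euclideanreal f"
    using f(1) by (simp add: continuous_map_in_subtopology)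
  then have c: "continuous_map X euclideanreal (\<lambda>z. 1 - f z)"
    by (intro continuous_map_diff continuous_map_const[THEN iffD2]) auto
  have Ct: "C \<subseteq> topspace X" using C closedin_subset by blast
  let ?g = "restrict (\<lambda>z. 1 - f z) (topspace X)"
  have "?g x = 1" using x f(2) by simp
  moreover have "\<forall>z\<in>C. ?g z = 0" using Ct f(3) by auto
  ultimately show ?thesis using cont_in_carrier[OF c] by blast
qed

lemma tych_haus: "tychonoff_space X \<Longrightarrow> Hausdorff_space X"
  unfolding tychonoff_space_def
  using completely_regular_imp_regular_space regular_t1_imp_Hausdorff_space by blast

lemma infinite_not_noetherian:
  assumes T: "tychonoff_space X" and inf: "infinite (topspace X)" and N: "noetherian_ring (Tpp X)"
  shows False
proof -
  interpret noetherian_ring "Tpp X" by (rule N)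
  obtain y V where yV0: "\<forall>n::nat. y n \<in> topspace X \<and> openin X (V n) \<and> y n \<in> V n \<and> (\<forall>k>n. y k \<notin> V n)"
    using haus_seq[OF tych_haus[OF T] inf] by blast
  have yV: "y n \<in> topspace X \<and> openin X (V n) \<and> y n \<in> V n \<and> (\<forall>k>n. y k \<notin> V n)" for n
    using yV0 by (rule spec)
  define A where "A n = {f \<in> carrier (Tpp X). \<forall>x\<in>y ` {n..}. f x = 0}" for n
  have idA: "ideal (A n) (Tpp X)" for n
  proof -
    have "y ` {n..} \<subseteq> topspace X" using yV by blast
    then show ?thesis unfolding A_def by (intro vanish_ideal ring_axioms)
  qed
  have Amono: "A n \<subseteq> A k" if "n \<le> k" for n k
    using that unfolding A_def by auto
  have wit: "\<exists>g. g \<in> A (Suc n) \<and> g \<notin> A n" for n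
  proof -
    have yn: "y n \<in> topspace X" "openin X (V n)" "y n \<in> V n" "\<forall>k>n. y k \<notin> V n" using yV[of n] by auto
    have cr: "completely_regular_space X" using T by (simp add: tychonoff_space_def)
    have cl: "closedin X (topspace X - V n)" using yn(2) by (simp add: closedin_diff)
    have "\<exists>g \<in> carrier (Tpp X). g (y n) = 1 \<and> (\<forall>z\<in>topspace X - V n. g z = 0)"
      using yn(3) by (intro sep_fun[OF cr cl yn(1)]) simp
    then obtain g where g: "g \<in> carrier (Tpp X)" "g (y n) = 1" "\<forall>z\<in>topspace X - V n. g z = 0" by blast
    have "g (y k) = 0" if "k \<ge> Suc n" for k
    proof -
      have "y k \<in> topspace X - V n" using yV[of k] yn(4) that by auto
      then show ?thesis using g(3) by blast
    qed
    then have "g \<in> A (Suc n)" unfolding A_def using g(1) by blast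
    moreover have "g \<notin> A n" unfolding A_def using g(2) by (auto intro!: bexI[of _ n])
    ultimately show ?thesis by blast
  qed
  have ch: "subset.chain {I. ideal I (Tpp X)} (range A)"
  proof -
    have lin: "A a \<subseteq> A b \<or> A b \<subseteq> A a" for a b
      using Amono[of a b] Amono[of b a] by (cases "a \<le> b") auto
    show ?thesis unfolding pred_on.chain_def using idA lin by blast
  qed
  have "\<Union>(range A) \<in> range A" using ideal_chain_is_trivial[OF _ ch] by simp
  then obtain m where m: "\<Union>(range A) = A m" by blast
  obtain g where "g \<in> A (Suc m)" "g \<notin> A m" using wit by blast
  then show False using m by blast
qed

lemma infinite_not_artinian:
  assumes T: "tychonoff_space X" and inf: "infinite (topspace X)" and N: "artinian_ring (Tpp X)"
  shows False
proof -
  have R: "ring (Tpp X)" using N artinian_ring_def by blast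
  obtain y V where yV0: "\<forall>n::nat. y n \<in> topspace X \<and> openin X (V n) \<and> y n \<in> V n \<and> (\<forall>k>n. y k \<notin> V n)"
    using haus_seq[OF tych_haus[OF T] inf] by blast
  have yV: "y n \<in> topspace X \<and> openin X (V n) \<and> y n \<in> V n \<and> (\<forall>k>n. y k \<notin> V n)" for n
    using yV0 by (rule spec)
  have yinj: "y k \<noteq> y n" if "k \<noteq> n" for k n
    using that yV[of k] yV[of n] by (metis linorder_neqE_nat)
  define B where "B n = {f \<in> carrier (Tpp X). \<forall>x\<in>y ` {..<n}. f x = 0}" for n
  have idB: "ideal (B n) (Tpp X)" for n
    unfolding B_def using yV by (intro vanish_ideal R) auto
  have Bmono: "B (Suc n) \<subseteq> B n" for n
    unfolding B_def by auto
  have AR: "\<forall>I::nat \<Rightarrow> ('a \<Rightarrow> real) set. (\<forall>n. ideal (I n) (Tpp X)) \<and> (\<forall>n. I (Suc n) \<subseteq> I n)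
        \<longrightarrow> (\<exists>m. \<forall>n\<ge>m. I n = I m)"
    using N unfolding artinian_ring_def by simp
  obtain m where m: "\<forall>n\<ge>m. B n = B m"
    using AR[rule_format, of B] idB Bmono by blast
  have "\<exists>g \<in> carrier (Tpp X). g (y m) = 1 \<and> (\<forall>z\<in>y ` {..<m}. g z = 0)"
  proof (rule sep_fun)
    show "completely_regular_space X" using T by (simp add: tychonoff_space_def)
    have t1: "t1_space X" using T by (simp add: tychonoff_space_def)
    have "finite (y ` {..<m})" by simp
    moreover have "y ` {..<m} \<subseteq> topspace X" using yV by blast
    ultimately show "closedin X (y ` {..<m})" using t1 t1_space_closedin_finite by blast
    show "y m \<in> topspace X" using yV by blast
    show "y m \<notin> y ` {..<m}" using yinj by fastforce
  qed
  then obtain g where g: "g \<in> carrier (Tpp X)" "g (y m) = 1" "\<forall>z\<in>y ` {..<m}. g z = 0" by blast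
  have "g \<in> B m" using g B_def by blast
  moreover have "g \<notin> B (Suc m)" using g(2) unfolding B_def by (auto intro!: bexI[of _ m])
  ultimately show False using m[rule_format, of "Suc m"] by simp
qed

lemma top_cozero: "is_cozero X (topspace X)"
  unfolding is_cozero_def cozero_set_def
  by (rule exI[of _ "\<lambda>_. 1"]) auto

lemma finite_carrier:
  assumes F: "finite (topspace X)" and T1: "t1_space X"
  shows "carrier (Tpp X) = extensional (topspace X)"
proof
  show "carrier (Tpp X) \<subseteq> extensional (topspace X)"
    by (auto simp: Tpp_simps Tpp_carrier_def)
  show "extensional (topspace X) \<subseteq> carrier (Tpp X)"
  proof
    fix f :: "'a \<Rightarrow> real" assume f: "f \<in> extensional (topspace X)"
    have D: "X = discrete_topology (topspace X)"
      using finite_t1_space_imp_discrete_topology[OF refl F T1] .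
    have "continuous_map X euclideanreal f"
      by (subst D) simp
    then have "continuous_map (subtopology X (topspace X)) euclideanreal f" by simp
    then show "f \<in> carrier (Tpp X)"
      using f top_cozero[of X] unfolding Tpp_simps Tpp_carrier_def by auto
  qed
qed

lemma finite_ring:
  assumes F: "finite (topspace X)" and T1: "t1_space X"
  shows "ring (Tpp X)"
proof -
  note fc = finite_carrier[OF F T1]
  show ?thesis
  proof (rule ringI)
    show "abelian_group (Tpp X)"
    proof (rule abelian_groupI)
      show "\<exists>y\<in>carrier (Tpp X). y \<oplus>\<^bsub>Tpp X\<^esub> x = \<zero>\<^bsub>Tpp X\<^esub>" if "x \<in> carrier (Tpp X)" for x
        by (rule bexI[of _ "\<lambda>z\<in>topspace X. - x z"]) (auto simp: fc Tpp_simps(2-5) fun_eq_iff)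
    qed (auto simp: fc Tpp_simps(2-5) fun_eq_iff extensional_def)
    show "monoid (Tpp X)"
      by (rule monoidI) (auto simp: fc Tpp_simps(2-5) fun_eq_iff extensional_def)
  qed (auto simp: fc Tpp_simps(2-5) fun_eq_iff extensional_def algebra_simps)
qed

definition supp :: "'a topology \<Rightarrow> ('a \<Rightarrow> real) set \<Rightarrow> 'a set" where
  "supp X I = {x \<in> topspace X. \<exists>f\<in>I. f x \<noteq> 0}"

lemma ideal_char:
  assumes F: "finite (topspace X)" and T1: "t1_space X" and I: "ideal I (Tpp X)"
    and f: "f \<in> carrier (Tpp X)" and van: "\<forall>x\<in>topspace X - supp X I. f x = 0"
  shows "f \<in> I"
proof -
  note fc = finite_carrier[OF F T1]
  interpret ideal I "Tpp X" by (rule I)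
  have fe: "f \<in> extensional (topspace X)" using f fc by simp
  have main: "(\<lambda>y\<in>topspace X. if y \<in> A then f y else 0) \<in> I" if "finite A" "A \<subseteq> supp X I" for A
    using that
  proof (induction A rule: finite_induct)
    case empty
    have "(\<lambda>y\<in>topspace X. if y \<in> {} then f y else 0) = \<zero>\<^bsub>Tpp X\<^esub>"
      by (simp add: Tpp_simps)
    then show ?case by simp
  next
    case (insert a A)
    have aS: "a \<in> topspace X" and "a \<in> supp X I" using insert.prems by (auto simp: supp_def)
    then obtain g where g: "g \<in> I" "g a \<noteq> 0" unfolding supp_def by blast
    have gc: "g \<in> carrier (Tpp X)" using g(1) a_subset by blast
    define e where "e = (\<lambda>y\<in>topspace X. if y = a then f a / g a else 0)"
    have ec: "e \<in> carrier (Tpp X)" unfolding fc e_def by simp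
    have eg: "e \<otimes>\<^bsub>Tpp X\<^esub> g \<in> I" using I_l_closed[OF g(1) ec] .
    have old: "(\<lambda>y\<in>topspace X. if y \<in> A then f y else 0) \<in> I" using insert by blast
    have "(\<lambda>y\<in>topspace X. if y \<in> A then f y else 0) \<oplus>\<^bsub>Tpp X\<^esub> (e \<otimes>\<^bsub>Tpp X\<^esub> g) \<in> I"
      using additive_subgroup.a_closed[OF ideal.axioms(1)[OF I] old eg] .
    moreover have "(\<lambda>y\<in>topspace X. if y \<in> A then f y else 0) \<oplus>\<^bsub>Tpp X\<^esub> (e \<otimes>\<^bsub>Tpp X\<^esub> g)
        = (\<lambda>y\<in>topspace X. if y \<in> insert a A then f y else 0)"
      using insert.hyps(2) g(2) by (auto simp: Tpp_simps e_def fun_eq_iff)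
    ultimately show ?case by (simp only:)
  qed
  have "finite (supp X I)" using F by (rule rev_finite_subset) (auto simp: supp_def)
  from main[OF this order.refl]
  have "(\<lambda>y\<in>topspace X. if y \<in> supp X I then f y else 0) \<in> I" .
  moreover have "(\<lambda>y\<in>topspace X. if y \<in> supp X I then f y else 0) = f"
    using fe van by (auto simp: fun_eq_iff extensional_def)
  ultimately show ?thesis by simp
qed

lemma ideal_eq:
  assumes F: "finite (topspace X)" and T1: "t1_space X" and I: "ideal I (Tpp X)" and J: "ideal J (Tpp X)"
    and sub: "I \<subseteq> J" and cs: "card (supp X J) \<le> card (supp X I)"
  shows "I = J"
proof -
  have fJ: "finite (supp X J)" using F by (rule rev_finite_subset) (auto simp: supp_def)
  have "supp X I \<subseteq> supp X J" using sub by (auto simp: supp_def)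
  then have eq: "supp X I = supp X J" using card_seteq[OF fJ _ cs] by blast
  have "J \<subseteq> I"
  proof
    fix f assume fJ: "f \<in> J"
    have fc: "f \<in> carrier (Tpp X)" using fJ J additive_subgroup.a_subset ideal.axioms(1) by blast
    have "\<forall>x\<in>topspace X - supp X I. f x = 0" using fJ eq by (auto simp: supp_def)
    then show "f \<in> I" using ideal_char[OF F T1 I fc] by blast
  qed
  then show ?thesis using sub by blast
qed

lemma finite_noetherian:
  assumes F: "finite (topspace X)" and T1: "t1_space X"
  shows "noetherian_ring (Tpp X)"
proof -
  interpret ring "Tpp X" by (rule finite_ring[OF F T1])
  show ?thesis
  proof (rule trivial_ideal_chain_imp_noetherian)
    fix C assume Cne: "C \<noteq> {}" and ch: "subset.chain {I. ideal I (Tpp X)} C"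
    have Cid: "\<And>I. I \<in> C \<Longrightarrow> ideal I (Tpp X)" using ch unfolding pred_on.chain_def by blast
    have Clin: "\<And>I J. I \<in> C \<Longrightarrow> J \<in> C \<Longrightarrow> I \<subseteq> J \<or> J \<subseteq> I" using ch unfolding pred_on.chain_def by blast
    let ?K = "(\<lambda>I. card (supp X I)) ` C"
    have "?K \<subseteq> {..card (topspace X)}"
      using F by (auto intro!: card_mono simp: supp_def)
    then have Kf: "finite ?K" using finite_subset by blast
    have "Max ?K \<in> ?K" using Kf Cne by (intro Max_in) auto
    then obtain I where I: "I \<in> C" "card (supp X I) = Max ?K" by (metis (no_types, lifting) imageE)
    have "J \<subseteq> I" if J: "J \<in> C" for J
    proof -
      have "card (supp X J) \<le> card (supp X I)" using I(2) Kf J by simp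
      then show ?thesis using Clin[OF I(1) J] ideal_eq[OF F T1 Cid[OF I(1)] Cid[OF J]] by blast
    qed
    then have "\<Union>C = I" using I(1) by blast
    then show "\<Union>C \<in> C" using I(1) by simp
  qed
qed

lemma finite_artinian:
  assumes F: "finite (topspace X)" and T1: "t1_space X"
  shows "artinian_ring (Tpp X)"
  unfolding artinian_ring_def
proof (intro conjI allI impI)
  show "ring (Tpp X)" by (rule finite_ring[OF F T1])
  fix I :: "nat \<Rightarrow> ('a \<Rightarrow> real) set"
  assume a: "(\<forall>n. ideal (I n) (Tpp X)) \<and> (\<forall>n. I (Suc n) \<subseteq> I n)"
  have Imono: "I n \<subseteq> I m" if "m \<le> n" for m n
    using lift_Suc_antimono_le[of I, OF _ that] a by blast
  let ?K = "range (\<lambda>n. card (supp X (I n)))"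
  have "?K \<subseteq> {..card (topspace X)}"
    using F by (auto intro!: card_mono simp: supp_def)
  then have Kf: "finite ?K" using finite_subset by blast
  have "Min ?K \<in> ?K" using Kf by (intro Min_in) auto
  then obtain m where m: "card (supp X (I m)) = Min ?K" by (metis (no_types, lifting) rangeE)
  have "I n = I m" if "n \<ge> m" for n
  proof -
    have "card (supp X (I m)) \<le> card (supp X (I n))" using m Kf by simp
    then show ?thesis using ideal_eq[OF F T1 _ _ Imono[OF that]] a by blast
  qed
  then show "\<exists>m. \<forall>n\<ge>m. I n = I m" by blast
qed

theorem theorem5p1:
  fixes X :: "'a topology"
  assumes "tychonoff_space X"
  shows "(finite (topspace X) \<longleftrightarrow> noetherian_ring (Tpp X))
       \<and> (finite (topspace X) \<longleftrightarrow> artinian_ring (Tpp X))"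
proof -
  have T1: "t1_space X" using assms by (simp add: tychonoff_space_def)
  show ?thesis
    using finite_noetherian[OF _ T1] finite_artinian[OF _ T1]
      infinite_not_noetherian[OF assms] infinite_not_artinian[OF assms] by blast
qed

end
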